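(* For every odometer $(X,T)$ there exists a metric $\rho$ on $X$ compatible with its topology such that $T$ has the (LRS) property with respect to $\rho$.
   Context: A dynamical system is $(X,T)$ with $X$ a compact metric space and $T\colon X\to X$ continuous. A point $x$ is regularly recurrent if for every open $U\ni x$ there is $n\geq1$ with $T^{in}(x)\in U$ for all $i\geq0$. $(X,T)$ is an odometer if it is equicontinuous (for every $\varepsilon>0$ there is $\delta>0$ with $d(x,y)<\delta\Rightarrow d(T^nx,T^ny)<\varepsilon$ for all $n\geq0$) and some regularly recurrent point has dense orbit. $T$ has the (LRS) property with respect to $\rho$ if for every $x\in X$ there is $\varepsilon_x>0$ such that $0<\rho(x,y)<\varepsilon_x$ implies $\rho(T(x),T(y))<\rho(x,y)$. *)

theory Defs
  imports "HOL-Analysis.Analysis"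
begin

definition dyn_system :: "'a::metric_space set \<Rightarrow> ('a \<Rightarrow> 'a) \<Rightarrow> bool" where
  "dyn_system X T \<longleftrightarrow> compact X \<and> T ` X \<subseteq> X \<and> continuous_on X T"

definition equicontinuous_sys :: "'a::metric_space set \<Rightarrow> ('a \<Rightarrow> 'a) \<Rightarrow> bool" where
  "equicontinuous_sys X T \<longleftrightarrow>
     (\<forall>\<epsilon>>0. \<exists>\<delta>>0. \<forall>x\<in>X. \<forall>y\<in>X. dist x y < \<delta> \<longrightarrow>
        (\<forall>n::nat. dist ((T ^^ n) x) ((T ^^ n) y) < \<epsilon>))"

definition regularly_recurrent :: "'a::metric_space set \<Rightarrow> ('a \<Rightarrow> 'a) \<Rightarrow> 'a \<Rightarrow> bool" where
  "regularly_recurrent X T x \<longleftrightarrow>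
     (\<forall>U. openin (top_of_set X) U \<and> x \<in> U \<longrightarrow>
        (\<exists>n::nat. n \<ge> 1 \<and> (\<forall>i::nat. (T ^^ (i * n)) x \<in> U)))"

definition dense_orbit :: "'a::metric_space set \<Rightarrow> ('a \<Rightarrow> 'a) \<Rightarrow> 'a \<Rightarrow> bool" where
  "dense_orbit X T x \<longleftrightarrow> closure (range (\<lambda>n::nat. (T ^^ n) x)) = X"

definition odometer :: "'a::metric_space set \<Rightarrow> ('a \<Rightarrow> 'a) \<Rightarrow> bool" where
  "odometer X T \<longleftrightarrow> dyn_system X T \<and> equicontinuous_sys X T \<and>
     (\<exists>x\<in>X. regularly_recurrent X T x \<and> dense_orbit X T x)"

definition LRS :: "'a set \<Rightarrow> ('a \<Rightarrow> 'a) \<Rightarrow> ('a \<Rightarrow> 'a \<Rightarrow> real) \<Rightarrow> bool" where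
  "LRS X T \<rho> \<longleftrightarrow> (\<forall>x\<in>X. \<exists>\<epsilon>>0. \<forall>y\<in>X.
       0 < \<rho> x y \<and> \<rho> x y < \<epsilon> \<longrightarrow> \<rho> (T x) (T y) < \<rho> x y)"

end

theory Submission
  imports Defs
begin

lemma mtop_eq:
  fixes X :: "'a::metric_space set"
  assumes M: "Metric_space X d"
    and A: "\<And>x r. x \<in> X \<Longrightarrow> r > 0 \<Longrightarrow> \<exists>e>0. \<forall>y\<in>X. dist y x < e \<longrightarrow> d x y < r"
    and B: "\<And>x e. x \<in> X \<Longrightarrow> e > 0 \<Longrightarrow> \<exists>r>0. \<forall>y\<in>X. d x y < r \<longrightarrow> dist y x < e"
  shows "Metric_space.mtopology X d = top_of_set X"
proof -
  interpret Metric_space X d by (rule M)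
  have "openin mtopology S \<longleftrightarrow> openin (top_of_set X) S" for S
  proof
    assume "openin mtopology S"
    hence S: "S \<subseteq> X" "\<And>x. x \<in> S \<Longrightarrow> \<exists>r>0. mball x r \<subseteq> S"
      unfolding openin_mtopology by blast+
    show "openin (top_of_set X) S"
      unfolding openin_euclidean_subtopology_iff
    proof (intro conjI ballI)
      show "S \<subseteq> X" by (rule S(1))
      fix x assume x: "x \<in> S"
      then obtain r where r: "r > 0" "mball x r \<subseteq> S" using S(2) by blast
      have xX: "x \<in> X" using x S(1) by blast
      obtain e where e: "e > 0" "\<forall>y\<in>X. dist y x < e \<longrightarrow> d x y < r"
        using A[OF xX r(1)] by blast
      have "\<forall>x'\<in>X. dist x' x < e \<longrightarrow> x' \<in> S"
      proof (intro ballI impI)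
        fix x' assume "x' \<in> X" "dist x' x < e"
        then have "x' \<in> mball x r" using e(2) xX by simp
        then show "x' \<in> S" using r(2) by blast
      qed
      then show "\<exists>e>0. \<forall>x'\<in>X. dist x' x < e \<longrightarrow> x' \<in> S" using e(1) by blast
    qed
  next
    assume "openin (top_of_set X) S"
    hence S: "S \<subseteq> X" "\<And>x. x \<in> S \<Longrightarrow> \<exists>e>0. \<forall>x'\<in>X. dist x' x < e \<longrightarrow> x' \<in> S"
      unfolding openin_euclidean_subtopology_iff by blast+
    show "openin mtopology S"
      unfolding openin_mtopology
    proof (intro conjI allI impI)
      show "S \<subseteq> X" by (rule S(1))
      fix x assume x: "x \<in> S"
      have xX: "x \<in> X" using x S(1) by blast
      obtain e where e: "e > 0" "\<forall>x'\<in>X. dist x' x < e \<longrightarrow> x' \<in> S" using S(2)[OF x] by blast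
      obtain r where r: "r > 0" "\<forall>y\<in>X. d x y < r \<longrightarrow> dist y x < e"
        using B[OF xX e(1)] by blast
      have "mball x r \<subseteq> S"
      proof
        fix y assume "y \<in> mball x r"
        then have "y \<in> X" "d x y < r" by simp_all
        then show "y \<in> S" using r(2) e(2) by blast
      qed
      then show "\<exists>r>0. mball x r \<subseteq> S" using r(1) by blast
    qed
  qed
  then show ?thesis by (simp add: topology_eq)
qed

locale odo =
  fixes X :: "'a::metric_space set" and T :: "'a \<Rightarrow> 'a" and x0 :: 'a
  assumes cpt: "compact X" and TX: "T ` X \<subseteq> X" and contT: "continuous_on X T"
    and equi: "equicontinuous_sys X T" and x0X: "x0 \<in> X"
    and rr: "regularly_recurrent X T x0" and dense: "dense_orbit X T x0"
begin

lemma TnX: "x \<in> X \<Longrightarrow> (T ^^ n) x \<in> X"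
  by (induction n) (use TX in auto)

lemma cont_n: "continuous_on X (T ^^ n)"
proof (induction n)
  case 0 then show ?case by (simp add: continuous_on_id)
next
  case (Suc n)
  have "continuous_on X (T ^^ n \<circ> T)"
    by (rule continuous_on_compose[OF contT]) (use Suc continuous_on_subset TX in blast)
  then show ?case by (simp add: funpow_Suc_right del: funpow.simps)
qed

lemma bnd: obtains B where "\<And>x y. x \<in> X \<Longrightarrow> y \<in> X \<Longrightarrow> dist x y \<le> B"
proof -
  have "bounded X" using cpt compact_imp_bounded by blast
  then obtain B where "\<forall>x\<in>X. \<forall>y\<in>X. dist x y \<le> B"
    using bounded_two_points by blast
  then show ?thesis using that by blast
qed

definition D :: "'a \<Rightarrow> 'a \<Rightarrow> real" where
  "D x y = (SUP n. dist ((T ^^ n) x) ((T ^^ n) y))"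

lemma bdd: "x \<in> X \<Longrightarrow> y \<in> X \<Longrightarrow> bdd_above (range (\<lambda>n. dist ((T ^^ n) x) ((T ^^ n) y)))"
proof -
  assume xy: "x \<in> X" "y \<in> X"
  obtain B where B: "\<And>x y. x \<in> X \<Longrightarrow> y \<in> X \<Longrightarrow> dist x y \<le> B" using bnd by blast
  show ?thesis by (rule bdd_aboveI2[of _ _ B]) (use B TnX xy in blast)
qed

lemma D_ge: "x \<in> X \<Longrightarrow> y \<in> X \<Longrightarrow> dist ((T ^^ n) x) ((T ^^ n) y) \<le> D x y"
  unfolding D_def by (rule cSUP_upper[OF _ bdd]) auto

lemma D_le: "(\<And>n. dist ((T ^^ n) x) ((T ^^ n) y) \<le> e) \<Longrightarrow> D x y \<le> e"
  unfolding D_def by (rule cSUP_least) auto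

lemma dist_le_D: "x \<in> X \<Longrightarrow> y \<in> X \<Longrightarrow> dist x y \<le> D x y"
  using D_ge[of x y 0] by simp

lemma D_nonneg: "x \<in> X \<Longrightarrow> y \<in> X \<Longrightarrow> 0 \<le> D x y"
  using dist_le_D zero_le_dist order_trans by blast

lemma D_sym: "D x y = D y x"
  unfolding D_def by (simp add: dist_commute)

lemma D_self: "D x x = 0"
  unfolding D_def by simp

lemma D_tri: assumes "x \<in> X" "y \<in> X" "z \<in> X" shows "D x z \<le> D x y + D y z"
proof (rule D_le)
  fix n
  have "dist ((T ^^ n) x) ((T ^^ n) z) \<le> dist ((T ^^ n) x) ((T ^^ n) y) + dist ((T ^^ n) y) ((T ^^ n) z)"
    by (rule dist_triangle)
  also have "\<dots> \<le> D x y + D y z" using D_ge assms by (intro add_mono) auto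
  finally show "dist ((T ^^ n) x) ((T ^^ n) z) \<le> D x y + D y z" .
qed

lemma D_T: "x \<in> X \<Longrightarrow> y \<in> X \<Longrightarrow> D (T x) (T y) \<le> D x y"
  apply (rule D_le)
  using D_ge[of x y "Suc n" for n] by (simp add: funpow_Suc_right del: funpow.simps)

lemma D_Tn: "x \<in> X \<Longrightarrow> y \<in> X \<Longrightarrow> D ((T^^m) x) ((T^^m) y) \<le> D x y"
proof (induction m)
  case (Suc m)
  then show ?case using D_T[of "(T^^m) x" "(T^^m) y"] TnX by fastforce
qed simp

lemma D_small: "e > 0 \<Longrightarrow> \<exists>\<delta>>0. \<forall>x\<in>X. \<forall>y\<in>X. dist x y < \<delta> \<longrightarrow> D x y \<le> e"
proof -
  assume "e > 0"
  then obtain \<delta> where d0: "\<delta> > 0" and h: "\<forall>x\<in>X. \<forall>y\<in>X. dist x y < \<delta> \<longrightarrow>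
        (\<forall>n::nat. dist ((T ^^ n) x) ((T ^^ n) y) < e)"
    using equi unfolding equicontinuous_sys_def by blast
  show ?thesis
  proof (rule exI[of _ \<delta>], intro conjI ballI impI)
    show "\<delta> > 0" by (rule d0)
    fix x y assume xy: "x \<in> X" "y \<in> X" "dist x y < \<delta>"
    have "dist ((T ^^ n) x) ((T ^^ n) y) < e" for n
      using h xy by simp
    then have "dist ((T ^^ n) x) ((T ^^ n) y) \<le> e" for n by (simp add: less_imp_le)
    then show "D x y \<le> e" by (rule D_le)
  qed
qed

lemma closure_D:
  assumes "S \<subseteq> X" "x \<in> X"
  shows "x \<in> closure S \<longleftrightarrow> (\<forall>e>0. \<exists>s\<in>S. D x s < e)"
proof
  assume x: "x \<in> closure S"
  show "\<forall>e>0. \<exists>s\<in>S. D x s < e"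
  proof (intro allI impI)
    fix e :: real assume "e > 0"
    then obtain \<delta> where d: "\<delta> > 0" "\<forall>x\<in>X. \<forall>y\<in>X. dist x y < \<delta> \<longrightarrow> D x y \<le> e/2"
      using D_small[of "e/2"] by auto
    obtain s where "s \<in> S" "dist s x < \<delta>" using x d(1) closure_approachable by blast
    then have "D x s \<le> e/2" using d assms by (auto simp: dist_commute)
    then show "\<exists>s\<in>S. D x s < e" using \<open>s \<in> S\<close> \<open>e > 0\<close> by (intro bexI[of _ s]) auto
  qed
next
  assume h: "\<forall>e>0. \<exists>s\<in>S. D x s < e"
  show "x \<in> closure S" unfolding closure_approachable
  proof (intro allI impI)
    fix e :: real assume "e > 0"
    then obtain s where "s \<in> S" "D x s < e" using h by blast
    moreover have "dist x s \<le> D x s" using dist_le_D[of x s] assms \<open>s \<in> S\<close> by auto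
    ultimately show "\<exists>y\<in>S. dist y x < e" by (intro bexI[of _ s]) (auto simp: dist_commute)
  qed
qed

lemma closedX: "closed X" using cpt compact_imp_closed by blast

lemma RR: "e > 0 \<Longrightarrow> \<exists>m\<ge>1. \<forall>i. D ((T^^(i*m)) x0) x0 < e"
proof -
  assume e: "e > 0"
  let ?U = "{y\<in>X. D y x0 < e}"
  have "openin (top_of_set X) ?U"
    unfolding openin_euclidean_subtopology_iff
  proof (intro conjI ballI)
    fix y assume y: "y \<in> ?U"
    define f where "f = (e - D y x0) / 2"
    have f: "f > 0" using y f_def by auto
    obtain \<delta> where d: "\<delta> > 0" "\<forall>x\<in>X. \<forall>y\<in>X. dist x y < \<delta> \<longrightarrow> D x y \<le> f"
      using D_small[OF f] by auto
    show "\<exists>e'>0. \<forall>x'\<in>X. dist x' y < e' \<longrightarrow> x' \<in> ?U"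
    proof (intro exI[of _ \<delta>] conjI ballI impI)
      fix x' assume "x' \<in> X" "dist x' y < \<delta>"
      then have "D x' y \<le> f" using d y by auto
      then show "x' \<in> ?U" using D_tri[of x' y x0] \<open>x' \<in> X\<close> y x0X f_def f by auto
    qed (use d in auto)
  qed auto
  moreover have "x0 \<in> ?U" using x0X e D_self by auto
  ultimately obtain n where "n \<ge> 1" "\<forall>i. (T ^^ (i * n)) x0 \<in> ?U"
    using rr unfolding regularly_recurrent_def by blast
  then show ?thesis by blast
qed

lemma funpow_app: "(T^^(a+b)) x = (T^^a) ((T^^b) x)"
  by (simp add: funpow_add)

end

context odo
begin

lemma iso_orbit: "D ((T^^a) x0) ((T^^b) x0) \<le> D ((T^^Suc a) x0) ((T^^Suc b) x0)"
proof -
  have "D ((T^^a) x0) ((T^^b) x0) \<le> D ((T^^Suc a) x0) ((T^^Suc b) x0) + 2*e" if e: "e > 0" for e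
  proof -
    obtain m where m: "m \<ge> 1" "\<forall>i. D ((T^^(i*m)) x0) x0 < e" using RR[OF e] by blast
    have m1: "D ((T^^m) x0) x0 < e" using m(2)[rule_format, of 1] by simp
    have Xs: "(T^^k) x0 \<in> X" for k using TnX x0X by blast
    have a: "D ((T^^a) x0) ((T^^(a+m)) x0) < e"
    proof -
      have "D ((T^^a) x0) ((T^^(a+m)) x0) = D ((T^^a) x0) ((T^^a) ((T^^m) x0))"
        by (simp add: funpow_app)
      also have "\<dots> \<le> D x0 ((T^^m) x0)" by (rule D_Tn[OF x0X Xs])
      finally show ?thesis using m1 D_sym by simp
    qed
    have b: "D ((T^^(b+m)) x0) ((T^^b) x0) < e"
    proof -
      have "D ((T^^(b+m)) x0) ((T^^b) x0) = D ((T^^b) ((T^^m) x0)) ((T^^b) x0)"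
        by (simp add: funpow_app)
      also have "\<dots> \<le> D ((T^^m) x0) x0" by (rule D_Tn[OF Xs x0X])
      finally show ?thesis using m1 by simp
    qed
    have c: "D ((T^^(a+m)) x0) ((T^^(b+m)) x0) \<le> D ((T^^Suc a) x0) ((T^^Suc b) x0)"
    proof -
      obtain k where k: "m = Suc k" using m(1) by (cases m) auto
      have "a + m = k + Suc a" "b + m = k + Suc b" using k by simp_all
      then have "(T^^(a+m)) x0 = (T^^(m-1)) ((T^^Suc a) x0)" "(T^^(b+m)) x0 = (T^^(m-1)) ((T^^Suc b) x0)"
        using k by (simp_all only: funpow_app[symmetric]) simp_all
      then show ?thesis using D_Tn[OF Xs[of "Suc a"] Xs[of "Suc b"], of "m-1"] by simp
    qed
    have "D ((T^^a) x0) ((T^^b) x0) \<le> D ((T^^a) x0) ((T^^(a+m)) x0) + D ((T^^(a+m)) x0) ((T^^b) x0)"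
      by (rule D_tri) (rule Xs)+
    also have "D ((T^^(a+m)) x0) ((T^^b) x0) \<le> D ((T^^(a+m)) x0) ((T^^(b+m)) x0) + D ((T^^(b+m)) x0) ((T^^b) x0)"
      by (rule D_tri) (rule Xs)+
    finally show ?thesis using a b c by linarith
  qed
  note * = this
  show ?thesis
  proof (rule field_le_epsilon)
    fix e :: real assume "e > 0"
    then show "D ((T^^a) x0) ((T^^b) x0) \<le> D ((T^^Suc a) x0) ((T^^Suc b) x0) + e"
      using *[of "e/2"] by simp
  qed
qed

lemma dense_orbit_D:
  assumes "x \<in> X" "e > 0" shows "\<exists>a. D x ((T^^a) x0) < e"
proof -
  have S: "range (\<lambda>n. (T^^n) x0) \<subseteq> X" using TnX x0X by blast
  have "x \<in> closure (range (\<lambda>n. (T^^n) x0))" using dense assms(1) unfolding dense_orbit_def by simp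
  then show ?thesis using closure_D[OF S assms(1)] assms(2) by blast
qed

lemma iso: assumes x: "x \<in> X" and y: "y \<in> X" shows "D (T x) (T y) = D x y"
proof -
  have Tx: "T x \<in> X" "T y \<in> X" using TX x y by auto
  have Xs: "(T^^k) x0 \<in> X" for k using TnX x0X by blast
  have TXs: "T ((T^^k) x0) \<in> X" for k using TX Xs by blast
  have "D x y \<le> D (T x) (T y) + 4*e" if e: "e > 0" for e
  proof -
    obtain a where a: "D x ((T^^a) x0) < e" using dense_orbit_D[OF x e] by blast
    obtain b where b: "D y ((T^^b) x0) < e" using dense_orbit_D[OF y e] by blast
    have a': "D (T x) (T ((T^^a) x0)) < e" using D_T[OF x Xs[of a]] a by linarith
    have b': "D (T ((T^^b) x0)) (T y) < e" using D_T[OF Xs[of b] y] b D_sym by (metis order_le_less_trans)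
    have o: "D ((T^^a) x0) ((T^^b) x0) \<le> D (T ((T^^a) x0)) (T ((T^^b) x0))"
      using iso_orbit[of a b] by simp
    have t1: "D x y \<le> D x ((T^^a) x0) + D ((T^^a) x0) y" by (rule D_tri[OF x Xs y])
    have t2: "D ((T^^a) x0) y \<le> D ((T^^a) x0) ((T^^b) x0) + D ((T^^b) x0) y" by (rule D_tri[OF Xs Xs y])
    have t3: "D (T ((T^^a) x0)) (T ((T^^b) x0)) \<le> D (T ((T^^a) x0)) (T x) + D (T x) (T ((T^^b) x0))"
      by (rule D_tri[OF TXs Tx(1) TXs])
    have t4: "D (T x) (T ((T^^b) x0)) \<le> D (T x) (T y) + D (T y) (T ((T^^b) x0))"
      by (rule D_tri[OF Tx(1) Tx(2) TXs])
    have s1: "D (T ((T^^a) x0)) (T x) = D (T x) (T ((T^^a) x0))" by (rule D_sym)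
    have s2: "D (T y) (T ((T^^b) x0)) = D (T ((T^^b) x0)) (T y)" by (rule D_sym)
    have s3: "D ((T^^b) x0) y = D y ((T^^b) x0)" by (rule D_sym)
    show ?thesis using t1 t2 t3 t4 a b a' b' o s1 s2 s3 by linarith
  qed
  note * = this
  have "D x y \<le> D (T x) (T y)"
  proof (rule field_le_epsilon)
    fix e :: real assume "e > 0"
    then show "D x y \<le> D (T x) (T y) + e"
      using *[of "e/4"] by simp
  qed
  then show ?thesis using D_T[OF x y] by linarith
qed

lemma iso_n: "x \<in> X \<Longrightarrow> y \<in> X \<Longrightarrow> D ((T^^m) x) ((T^^m) y) = D x y"
proof (induction m)
  case (Suc m)
  then show ?case using iso[of "(T^^m) x" "(T^^m) y"] TnX by simp
qed simp

lemma D_zero: "x \<in> X \<Longrightarrow> y \<in> X \<Longrightarrow> D x y = 0 \<Longrightarrow> x = y"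
  using dist_le_D[of x y] by simp

lemma inj_n: "x \<in> X \<Longrightarrow> y \<in> X \<Longrightarrow> (T^^m) x = (T^^m) y \<Longrightarrow> x = y"
  using iso_n[of x y m] D_self D_zero by metis

end

context odo
begin

definition A :: "nat \<Rightarrow> 'a set" where "A n = closure (range (\<lambda>i. (T^^(i*n)) x0))"
definition p :: "nat \<Rightarrow> nat" where "p n = (LEAST q. 0 < q \<and> (T^^q) x0 \<in> A n)"
definition piece :: "nat \<Rightarrow> nat \<Rightarrow> 'a set" where "piece n r = (T^^r) ` A n"
definition pii :: "nat \<Rightarrow> 'a \<Rightarrow> nat" where "pii n x = (THE r. r < p n \<and> x \<in> piece n r)"

lemma Xs: "(T^^k) x0 \<in> X" using TnX x0X by blast

lemma orb_sub: "range (\<lambda>i. (T^^(i*n)) x0) \<subseteq> X" using Xs by blast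

lemma A_sub: "A n \<subseteq> X"
  unfolding A_def using closure_minimal[OF orb_sub closedX] .

lemma A_cpt: "compact (A n)"
proof -
  have "X \<inter> A n = A n" using A_sub by blast
  moreover have "compact (X \<inter> A n)" by (rule compact_Int_closed[OF cpt]) (simp add: A_def)
  ultimately show ?thesis by simp
qed

lemma orb_A: "(T^^(i*n)) x0 \<in> A n"
  unfolding A_def by (simp add: closure_subset[THEN subsetD])

lemma x0_A: "x0 \<in> A n" using orb_A[of 0] by simp

lemma A_D: "y \<in> X \<Longrightarrow> y \<in> A n \<longleftrightarrow> (\<forall>e>0. \<exists>i. D y ((T^^(i*n)) x0) < e)"
  unfolding A_def using closure_D[OF orb_sub] by auto

lemma cl_image:
  assumes "S \<subseteq> X" "(T^^m) ` S \<subseteq> C" "closed C"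
  shows "(T^^m) ` closure S \<subseteq> C"
proof (rule image_closure_subset[OF _ assms(3,2)])
  show "continuous_on (closure S) (T ^^ m)"
    using cont_n continuous_on_subset closure_minimal[OF assms(1) closedX] by blast
qed

lemma A_inv_n: "(T^^(k*n)) ` A n \<subseteq> A n"
  unfolding A_def
proof (rule cl_image[OF orb_sub])
  show "(T ^^ (k * n)) ` range (\<lambda>i. (T ^^ (i * n)) x0) \<subseteq> closure (range (\<lambda>i. (T ^^ (i * n)) x0))"
  proof
    fix z assume "z \<in> (T ^^ (k * n)) ` range (\<lambda>i. (T ^^ (i * n)) x0)"
    then obtain i where "z = (T^^(k*n)) ((T^^(i*n)) x0)" by blast
    then have "z = (T^^((k+i)*n)) x0" by (simp add: funpow_app[symmetric] algebra_simps)
    then show "z \<in> closure (range (\<lambda>i. (T ^^ (i * n)) x0))"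
      using closure_subset by fastforce
  qed
qed simp

lemma A_inv:
  assumes "(T^^m) x0 \<in> A n" shows "(T^^m) ` A n \<subseteq> A n"
  unfolding A_def
proof (rule cl_image[OF orb_sub])
  show "(T ^^ m) ` range (\<lambda>i. (T ^^ (i * n)) x0) \<subseteq> closure (range (\<lambda>i. (T ^^ (i * n)) x0))"
  proof
    fix z assume "z \<in> (T ^^ m) ` range (\<lambda>i. (T ^^ (i * n)) x0)"
    then obtain i where "z = (T^^m) ((T^^(i*n)) x0)" by blast
    then have "z = (T^^(i*n)) ((T^^m) x0)" by (simp add: funpow_app[symmetric] add.commute)
    then show "z \<in> closure (range (\<lambda>i. (T ^^ (i * n)) x0))"
      using A_inv_n assms unfolding A_def by blast
  qed
qed simp

lemma large_approx:
  assumes a: "a \<in> A n" and e: "e > 0"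
  shows "\<exists>i\<ge>M. D a ((T^^(i*n)) x0) < e"
proof -
  have aX: "a \<in> X" using a A_sub by blast
  obtain i0 where i0: "D a ((T^^(i0*n)) x0) < e/2" using A_D[OF aX] a e by (meson half_gt_zero)
  obtain m where m: "m \<ge> 1" "\<forall>i. D ((T^^(i*m)) x0) x0 < e/2" using RR[of "e/2"] e by auto
  have m1: "D ((T^^(M*n*m)) x0) x0 < e/2" using m(2) by blast
  have eq: "(T^^((i0 + M*m)*n)) x0 = (T^^(i0*n)) ((T^^(M*n*m)) x0)"
    by (simp add: funpow_app[symmetric] algebra_simps)
  have "D ((T^^(i0*n)) x0) ((T^^((i0 + M*m)*n)) x0) = D x0 ((T^^(M*n*m)) x0)"
    unfolding eq by (rule iso_n[OF x0X Xs])
  then have "D ((T^^(i0*n)) x0) ((T^^((i0 + M*m)*n)) x0) < e/2" using m1 D_sym by simp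
  then have "D a ((T^^((i0 + M*m)*n)) x0) < e"
    using D_tri[OF aX Xs[of "i0*n"] Xs[of "(i0 + M*m)*n"]] i0 by linarith
  moreover have "i0 + M*m \<ge> M"
  proof -
    have "M*1 \<le> M*m" using m(1) by (rule mult_le_mono2)
    then show ?thesis by linarith
  qed
  ultimately show ?thesis by blast
qed

lemma shift_back:
  assumes b: "b \<in> A n" and tb: "(T^^t) b \<in> A n"
  shows "(T^^t) x0 \<in> A n"
proof -
  have bX: "b \<in> X" using b A_sub by blast
  have tbX: "(T^^t) b \<in> X" using TnX bX by blast
  show ?thesis unfolding A_D[OF Xs]
  proof (intro allI impI)
    fix e :: real assume e: "e > 0"
    obtain i where i: "D b ((T^^(i*n)) x0) < e/2" using A_D[OF bX] b e by (meson half_gt_zero)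
    have i': "D ((T^^t) b) ((T^^t) ((T^^(i*n)) x0)) < e/2" using iso_n[OF bX Xs] i by simp
    obtain j where j: "j \<ge> i" "D ((T^^t) b) ((T^^(j*n)) x0) < e/2"
      using large_approx[OF tb, of "e/2" i] e by auto
    have tX: "(T^^t) ((T^^(i*n)) x0) \<in> X" using TnX[OF Xs] by blast
    have tri: "D ((T^^t) ((T^^(i*n)) x0)) ((T^^(j*n)) x0) \<le> D ((T^^t) ((T^^(i*n)) x0)) ((T^^t) b) + D ((T^^t) b) ((T^^(j*n)) x0)"
      by (rule D_tri[OF tX tbX Xs])
    have sy: "D ((T^^t) ((T^^(i*n)) x0)) ((T^^t) b) = D ((T^^t) b) ((T^^t) ((T^^(i*n)) x0))" by (rule D_sym)
    have "D ((T^^t) ((T^^(i*n)) x0)) ((T^^(j*n)) x0) < e"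
      using tri sy i' j(2) by linarith
    moreover have "(T^^t) ((T^^(i*n)) x0) = (T^^(i*n)) ((T^^t) x0)"
      by (simp add: funpow_app[symmetric] add.commute)
    moreover have "(T^^(j*n)) x0 = (T^^(i*n)) ((T^^((j-i)*n)) x0)"
      using j(1) by (simp add: funpow_app[symmetric] algebra_simps diff_mult_distrib)
    ultimately have "D ((T^^(i*n)) ((T^^t) x0)) ((T^^(i*n)) ((T^^((j-i)*n)) x0)) < e" by simp
    then have "D ((T^^t) x0) ((T^^((j-i)*n)) x0) < e" using iso_n[OF Xs Xs] by simp
    then show "\<exists>i. D ((T ^^ t) x0) ((T ^^ (i * n)) x0) < e" by blast
  qed
qed

context fixes n :: nat assumes n1: "n \<ge> 1"
begin

lemma p_ex: "0 < p n \<and> (T^^(p n)) x0 \<in> A n"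
proof -
  have "0 < n \<and> (T^^n) x0 \<in> A n" using n1 orb_A[of 1 n] by simp
  then show ?thesis unfolding p_def by (rule LeastI)
qed

lemma p_pos: "0 < p n" using p_ex by blast
lemma p_A: "(T^^(p n)) x0 \<in> A n" using p_ex by blast

lemma p_min: "0 < q \<Longrightarrow> q < p n \<Longrightarrow> (T^^q) x0 \<notin> A n"
  unfolding p_def using not_less_Least by blast

lemma p_inv: "(T^^(p n)) ` A n \<subseteq> A n" using A_inv[OF p_A] .

lemma p_inv_k: "(T^^(k * p n)) ` A n \<subseteq> A n"
proof (induction k)
  case 0 then show ?case by simp
next
  case (Suc k)
  have "(T^^(Suc k * p n)) = (T^^(p n)) \<circ> (T^^(k * p n))" by (simp add: funpow_add[symmetric])
  then show ?case using Suc p_inv by (simp add: image_comp[symmetric]) blast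
qed

lemma piece_sub: "piece n r \<subseteq> X"
  unfolding piece_def using A_sub TnX by blast

lemma piece_cpt: "compact (piece n r)"
  unfolding piece_def
  by (rule compact_continuous_image[OF continuous_on_subset[OF cont_n A_sub] A_cpt])

lemma orbit_piece: "(T^^m) x0 \<in> piece n (m mod p n)"
proof -
  have "(T^^m) x0 = (T^^(m mod p n)) ((T^^(m div p n * p n)) x0)"
    by (simp add: funpow_app[symmetric])
  moreover have "(T^^(m div p n * p n)) x0 \<in> A n" using p_inv_k x0_A by blast
  ultimately show ?thesis unfolding piece_def by blast
qed

lemma cover: "x \<in> X \<Longrightarrow> \<exists>r<p n. x \<in> piece n r"
proof -
  assume x: "x \<in> X"
  let ?U = "\<Union>r\<in>{..<p n}. piece n r"
  have "compact ?U" by (rule compact_UN) (auto intro: piece_cpt)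
  then have "closed ?U" by (rule compact_imp_closed)
  moreover have "range (\<lambda>m. (T^^m) x0) \<subseteq> ?U"
  proof
    fix z assume "z \<in> range (\<lambda>m. (T^^m) x0)"
    then obtain m where z: "z = (T^^m) x0" by blast
    then have "z \<in> piece n (m mod p n)" using orbit_piece by simp
    moreover have "m mod p n \<in> {..<p n}" using p_pos by simp
    ultimately show "z \<in> ?U" by blast
  qed
  ultimately have "closure (range (\<lambda>m. (T^^m) x0)) \<subseteq> ?U" by (rule closure_minimal[rotated])
  then show ?thesis using x dense unfolding dense_orbit_def by auto
qed

lemma disj: "r < p n \<Longrightarrow> s < p n \<Longrightarrow> x \<in> piece n r \<Longrightarrow> x \<in> piece n s \<Longrightarrow> r = s"
proof -
  have main: "False" if rs: "r < s" "s < p n" "x \<in> piece n r" "x \<in> piece n s" for r s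
  proof -
    obtain a b where ab: "a \<in> A n" "b \<in> A n" "x = (T^^r) a" "x = (T^^s) b"
      using rs unfolding piece_def by blast
    have "(T^^s) b = (T^^r) ((T^^(s-r)) b)" using rs(1) by (simp add: funpow_app[symmetric])
    then have "a = (T^^(s-r)) b" using inj_n[of a "(T^^(s-r)) b" r] ab A_sub TnX by auto
    then have "(T^^(s-r)) x0 \<in> A n" using shift_back[OF ab(2)] ab(1) by simp
    then show False using p_min[of "s-r"] rs by simp
  qed
  assume "r < p n" "s < p n" "x \<in> piece n r" "x \<in> piece n s"
  then show "r = s" using main[of r s] main[of s r] by (metis linorder_neqE_nat)
qed

lemma pii: "x \<in> X \<Longrightarrow> pii n x < p n \<and> x \<in> piece n (pii n x)"
  unfolding pii_def by (rule theI') (use cover disj in blast)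

lemma pii_eq: "r < p n \<Longrightarrow> x \<in> piece n r \<Longrightarrow> pii n x = r"
  using pii disj piece_sub by blast

lemma pii_lt: "x \<in> X \<Longrightarrow> pii n x < p n" using pii by blast

lemma pii_T: assumes x: "x \<in> X" shows "pii n (T x) = Suc (pii n x) mod p n"
proof -
  obtain a where a: "a \<in> A n" "x = (T^^(pii n x)) a" using pii[OF x] unfolding piece_def by blast
  have Tx: "T x = (T^^(Suc (pii n x))) a" using a by simp
  show ?thesis
  proof (cases "Suc (pii n x) < p n")
    case True
    have "T x \<in> piece n (Suc (pii n x))" unfolding piece_def using Tx a(1) by blast
    then show ?thesis using True pii_eq by simp
  next
    case False
    then have "Suc (pii n x) = p n" using pii_lt[OF x] by simp
    then have "T x \<in> A n" using Tx a p_inv by auto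
    then show ?thesis using pii_eq[of 0 "T x"] p_pos \<open>Suc (pii n x) = p n\<close>
      by (simp add: piece_def)
  qed
qed

lemma pii_orbit: "pii n ((T^^m) x0) = m mod p n"
  using pii_eq orbit_piece p_pos by simp

lemma mesh:
  assumes eps: "\<forall>i. D ((T^^(i*n)) x0) x0 < \<epsilon>" and x: "x \<in> X" and y: "y \<in> X"
    and eq: "pii n x = pii n y"
  shows "D x y \<le> 2*\<epsilon>"
proof -
  have Aball: "D a x0 \<le> \<epsilon>" if a: "a \<in> A n" for a
  proof (rule field_le_epsilon)
    fix e :: real assume e: "e > 0"
    have aX: "a \<in> X" using a A_sub by blast
    obtain i where "D a ((T^^(i*n)) x0) < e" using A_D[OF aX] a e by blast
    then show "D a x0 \<le> \<epsilon> + e" using D_tri[OF aX Xs[of "i*n"] x0X] eps[rule_format, of i] by linarith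
  qed
  have close: "D z ((T^^(pii n x)) x0) \<le> \<epsilon>" if z: "z \<in> piece n (pii n x)" for z
  proof -
    obtain a where a: "a \<in> A n" "z = (T^^(pii n x)) a" using z unfolding piece_def by blast
    have aX: "a \<in> X" using a(1) A_sub by blast
    show ?thesis using iso_n[OF aX x0X, of "pii n x"] Aball[OF a(1)] a(2) by simp
  qed
  have "D x ((T^^(pii n x)) x0) \<le> \<epsilon>" using close pii[OF x] by blast
  moreover have "D y ((T^^(pii n x)) x0) \<le> \<epsilon>" using close pii[OF y] eq by simp
  moreover have "D ((T^^(pii n x)) x0) y = D y ((T^^(pii n x)) x0)" by (rule D_sym)
  ultimately show ?thesis using D_tri[OF x Xs y, of "pii n x"] by linarith
qed

lemma piece_open: assumes x: "x \<in> X"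
  shows "\<exists>\<delta>>0. \<forall>y\<in>X. dist y x < \<delta> \<longrightarrow> pii n y = pii n x"
proof -
  let ?C = "\<Union>s\<in>{s. s < p n \<and> s \<noteq> pii n x}. piece n s"
  have "compact ?C" by (rule compact_UN) (auto intro: piece_cpt)
  then have cC: "closed ?C" by (rule compact_imp_closed)
  have "x \<notin> ?C" using disj pii[OF x] by blast
  then have xC: "x \<in> - ?C" by blast
  have op: "open (- ?C)" using cC by (rule open_Compl)
  obtain \<delta> where d: "\<delta> > 0" "ball x \<delta> \<subseteq> - ?C"
    using open_contains_ball[THEN iffD1, OF op] xC by blast
  show ?thesis
  proof (intro exI[of _ \<delta>] conjI ballI impI)
    fix y assume y: "y \<in> X" "dist y x < \<delta>"
    then have "y \<in> ball x \<delta>" by (simp add: dist_commute)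
    then have "y \<in> - ?C" by (rule subsetD[OF d(2)])
    then have yC: "y \<notin> ?C" by simp
    show "pii n y = pii n x"
    proof (rule ccontr)
      assume "pii n y \<noteq> pii n x"
      then have "y \<in> ?C" using pii[OF y(1)] by blast
      then show False using yC by contradiction
    qed
  qed (rule d(1))
qed

end

lemma nest:
  assumes n1: "n \<ge> 1" and dv: "n dvd n'" and n'1: "n' \<ge> 1"
  shows "A n' \<subseteq> A n" "p n dvd p n'" "\<And>x. x \<in> X \<Longrightarrow> pii n x = pii n' x mod p n"
proof -
  obtain k where k: "n' = n * k" using dv by blast
  have "range (\<lambda>i. (T^^(i*n')) x0) \<subseteq> range (\<lambda>i. (T^^(i*n)) x0)"
  proof
    fix z assume "z \<in> range (\<lambda>i. (T^^(i*n')) x0)"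
    then obtain i where z: "z = (T^^(i*n')) x0" by blast
    have eq: "i * n' = (i*k) * n" using k by (simp add: algebra_simps)
    have "z = (T^^((i*k)*n)) x0" unfolding z eq by (rule refl)
    then show "z \<in> range (\<lambda>i. (T^^(i*n)) x0)" by blast
  qed
  then show A: "A n' \<subseteq> A n" unfolding A_def by (rule closure_mono)
  have "(T^^(p n')) x0 \<in> A n" using p_A[OF n'1] A by blast
  then have "(T^^(p n')) x0 \<in> piece n 0" by (simp add: piece_def)
  then have "pii n ((T^^(p n')) x0) = 0" using pii_eq[OF n1] p_pos[OF n1] by blast
  then show "p n dvd p n'" using pii_orbit[OF n1, of "p n'"] by (simp add: dvd_eq_mod_eq_0)
  fix x assume x: "x \<in> X"
  obtain a where a: "a \<in> A n'" "x = (T^^(pii n' x)) a" using pii[OF n'1 x] unfolding piece_def by blast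
  let ?r = "pii n' x"
  have "x = (T^^(?r mod p n)) ((T^^(?r div p n * p n)) a)"
    using a by (simp add: funpow_app[symmetric])
  moreover have "(T^^(?r div p n * p n)) a \<in> A n" using p_inv_k[OF n1] a A by blast
  ultimately have "x \<in> piece n (?r mod p n)" unfolding piece_def by blast
  then show "pii n x = pii n' x mod p n" using pii_eq[OF n1] p_pos[OF n1] by simp
qed

end

context odo
begin

lemma p_one: "p 1 = 1"
proof -
  have "0 < p 1" using p_pos[of 1] by simp
  moreover have "\<not> p 1 > 1"
  proof
    assume "p 1 > 1"
    then have "(T^^1) x0 \<notin> A 1" using p_min[of 1 1] by simp
    moreover have "(T^^1) x0 \<in> A 1" using orb_A[of 1 1] by simp
    ultimately show False by contradiction
  qed
  ultimately show ?thesis by linarith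
qed

lemma next_level:
  assumes inf: "infinite X" and n1: "n \<ge> 1" and e: "e > 0"
  shows "\<exists>n'. n' \<ge> 1 \<and> n dvd n' \<and> p n < p n' \<and>
           (\<forall>x\<in>X. \<forall>y\<in>X. pii n' x = pii n' y \<longrightarrow> D x y \<le> e)"
proof -
  have "\<not> inj_on (pii n) X"
  proof
    assume "inj_on (pii n) X"
    moreover have "pii n ` X \<subseteq> {..<p n}" using pii_lt[OF n1] by blast
    ultimately have "finite X" using inj_on_finite by blast
    then show False using inf by contradiction
  qed
  then obtain a b where ab: "a \<in> X" "b \<in> X" "a \<noteq> b" "pii n a = pii n b"
    unfolding inj_on_def by blast
  have Dab: "D a b > 0" using dist_le_D[OF ab(1,2)] ab(3)
    by (metis dual_order.strict_trans1 zero_less_dist_iff)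
  define \<epsilon> where "\<epsilon> = min e (D a b) / 3"
  have \<epsilon>: "\<epsilon> > 0" using e Dab \<epsilon>_def by simp
  obtain m where m: "m \<ge> 1" "\<forall>i. D ((T^^(i*m)) x0) x0 < \<epsilon>" using RR[OF \<epsilon>] by blast
  define n' where "n' = m * n"
  have n'1: "n' \<ge> 1" using m(1) n1 n'_def by simp
  have dv: "n dvd n'" using n'_def by simp
  have eps': "\<forall>i. D ((T^^(i*n')) x0) x0 < \<epsilon>"
  proof
    fix i
    have eq: "i * n' = (i*n) * m" using n'_def by (simp add: algebra_simps)
    show "D ((T^^(i*n')) x0) x0 < \<epsilon>" unfolding eq by (rule m(2)[rule_format])
  qed
  have ms: "\<forall>x\<in>X. \<forall>y\<in>X. pii n' x = pii n' y \<longrightarrow> D x y \<le> 2*\<epsilon>"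
    using mesh[OF n'1 eps'] by blast
  have e1: "2*\<epsilon> \<le> e" "2*\<epsilon> < D a b" using \<epsilon>_def e Dab by auto
  have pd: "p n dvd p n'" using nest(2)[OF n1 dv n'1] .
  have neq: "p n' \<noteq> p n"
  proof
    assume eq: "p n' = p n"
    have "pii n a = pii n' a" using nest(3)[OF n1 dv n'1 ab(1)] pii_lt[OF n'1 ab(1)] eq by simp
    moreover have "pii n b = pii n' b" using nest(3)[OF n1 dv n'1 ab(2)] pii_lt[OF n'1 ab(2)] eq by simp
    ultimately have "pii n' a = pii n' b" using ab(4) by simp
    then have "D a b \<le> 2*\<epsilon>" using ms ab by blast
    then show False using e1 by linarith
  qed
  have "p n \<le> p n'" using pd p_pos[OF n'1] by (simp add: dvd_imp_le)
  then have "p n < p n'" using neq by linarith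
  moreover have "\<forall>x\<in>X. \<forall>y\<in>X. pii n' x = pii n' y \<longrightarrow> D x y \<le> e"
  proof (intro ballI impI)
    fix x y assume "x \<in> X" "y \<in> X" "pii n' x = pii n' y"
    then have "D x y \<le> 2*\<epsilon>" using ms by blast
    then show "D x y \<le> e" using e1 by linarith
  qed
  ultimately show ?thesis using n'1 dv by blast
qed

end

lemma finite_case:
  fixes X :: "'a::metric_space set" and T :: "'a \<Rightarrow> 'a"
  assumes fin: "finite X"
  shows "Metric_space X dist \<and> Metric_space.mtopology X dist = top_of_set X \<and> LRS X T dist"
proof (intro conjI)
  show M: "Metric_space X dist" by (rule Met_TC.subspace) simp
  show "Metric_space.mtopology X dist = top_of_set X"
    by (rule mtop_eq[OF M]) (auto simp: dist_commute)
  show "LRS X T dist"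
    unfolding LRS_def
  proof
    fix x assume x: "x \<in> X"
    define S where "S = (\<lambda>y. dist x y) ` (X - {x})"
    have fS: "finite S" using fin S_def by simp
    show "\<exists>\<epsilon>>0. \<forall>y\<in>X. 0 < dist x y \<and> dist x y < \<epsilon> \<longrightarrow> dist (T x) (T y) < dist x y"
    proof (cases "S = {}")
      case True
      show ?thesis
      proof (intro exI[of _ 1] conjI ballI impI)
        fix y assume "y \<in> X" "0 < dist x y \<and> dist x y < 1"
        then have "dist x y \<in> S" using S_def by auto
        then show "dist (T x) (T y) < dist x y" using True by simp
      qed simp
    next
      case False
      have pos: "Min S > 0"
      proof -
        have "Min S \<in> S" using Min_in[OF fS False] .
        then obtain y where "y \<in> X" "y \<noteq> x" "Min S = dist x y" using S_def by auto
        then show ?thesis by simp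
      qed
      show ?thesis
      proof (intro exI[of _ "Min S"] conjI ballI impI)
        fix y assume y: "y \<in> X" "0 < dist x y \<and> dist x y < Min S"
        then have "dist x y \<in> S" using S_def by auto
        then have "Min S \<le> dist x y" using Min_le[OF fS] by blast
        then show "dist (T x) (T y) < dist x y" using y by linarith
      qed (rule pos)
    qed
  qed
qed

locale odo_inf = odo +
  assumes inf: "infinite X"
begin

definition nxt :: "nat \<Rightarrow> nat \<Rightarrow> nat" where
  "nxt n k = (SOME n'. n' \<ge> 1 \<and> n dvd n' \<and> p n < p n' \<and>
       (\<forall>x\<in>X. \<forall>y\<in>X. pii n' x = pii n' y \<longrightarrow> D x y \<le> (1/2)^(Suc k)))"

primrec lev :: "nat \<Rightarrow> nat" where
  "lev 0 = 1"
| "lev (Suc k) = nxt (lev k) k"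

lemma nxt: "n \<ge> 1 \<Longrightarrow> nxt n k \<ge> 1 \<and> n dvd nxt n k \<and> p n < p (nxt n k) \<and>
       (\<forall>x\<in>X. \<forall>y\<in>X. pii (nxt n k) x = pii (nxt n k) y \<longrightarrow> D x y \<le> (1/2)^(Suc k))"
  unfolding nxt_def by (rule someI_ex) (rule next_level[OF inf], auto)

lemma lev1: "lev k \<ge> 1"
proof (induction k)
  case (Suc k)
  then show ?case using nxt[of "lev k" k] by simp
qed simp

lemma lev_step: "lev k dvd lev (Suc k) \<and> p (lev k) < p (lev (Suc k)) \<and>
       (\<forall>x\<in>X. \<forall>y\<in>X. pii (lev (Suc k)) x = pii (lev (Suc k)) y \<longrightarrow> D x y \<le> (1/2)^(Suc k))"
  using nxt[OF lev1[of k], of k] by simp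

definition P :: "nat \<Rightarrow> nat" where "P k = p (lev k)"
definition pk :: "nat \<Rightarrow> 'a \<Rightarrow> nat" where "pk k x = pii (lev k) x"

lemma lev_dvd: "lev k dvd lev (k + d)"
proof (induction d)
  case (Suc d)
  then show ?case using lev_step[of "k+d"] dvd_trans by auto
qed simp

lemma lev_dvd': "k \<le> k' \<Longrightarrow> lev k dvd lev k'"
  using lev_dvd[of k "k'-k"] by simp

lemma P_pos: "P k > 0" unfolding P_def using p_pos[OF lev1] .
lemma P0: "P 0 = 1" unfolding P_def using p_one by simp
lemma P_Suc: "P k < P (Suc k)" unfolding P_def using lev_step by blast
lemma P_dvd: "k \<le> k' \<Longrightarrow> P k dvd P k'"
  unfolding P_def using nest(2)[OF lev1 lev_dvd' lev1] by blast

lemma pk_lt: "x \<in> X \<Longrightarrow> pk k x < P k" unfolding pk_def P_def using pii_lt[OF lev1] .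
lemma pk_nest: "x \<in> X \<Longrightarrow> k \<le> k' \<Longrightarrow> pk k x = pk k' x mod P k"
  unfolding pk_def P_def using nest(3)[OF lev1 lev_dvd' lev1] by blast
lemma pk_T: "x \<in> X \<Longrightarrow> pk k (T x) = Suc (pk k x) mod P k"
  unfolding pk_def P_def using pii_T[OF lev1] .
lemma pk0: "x \<in> X \<Longrightarrow> pk 0 x = 0" using pk_lt[of x 0] P0 by simp

lemma pk_open: "x \<in> X \<Longrightarrow> \<exists>\<delta>>0. \<forall>y\<in>X. dist y x < \<delta> \<longrightarrow> pk k y = pk k x"
  unfolding pk_def using piece_open[OF lev1] .

lemma pk_mesh: "x \<in> X \<Longrightarrow> y \<in> X \<Longrightarrow> pk (Suc k) x = pk (Suc k) y \<Longrightarrow> D x y \<le> (1/2)^(Suc k)"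
  unfolding pk_def using lev_step by blast

lemma pk_down: "x \<in> X \<Longrightarrow> y \<in> X \<Longrightarrow> pk k x = pk k y \<Longrightarrow> l \<le> k \<Longrightarrow> pk l x = pk l y"
proof -
  assume a: "x \<in> X" "y \<in> X" "pk k x = pk k y" "l \<le> k"
  show ?thesis using pk_nest[OF a(1) a(4)] pk_nest[OF a(2) a(4)] a(3) by simp
qed

lemma sep: assumes x: "x \<in> X" and y: "y \<in> X" and ne: "x \<noteq> y"
  shows "\<exists>k. pk k x \<noteq> pk k y"
proof -
  have "D x y > 0" using dist_le_D[OF x y] ne
    by (metis dual_order.strict_trans1 zero_less_dist_iff)
  then obtain k where k: "(1/2::real)^k < D x y" using real_arch_pow_inv[of "D x y" "1/2"] by auto
  have "(1/2::real)^(Suc k) \<le> (1/2)^k" by (rule power_decreasing) auto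
  then have "\<not> D x y \<le> (1/2)^(Suc k)" using k by linarith
  then show ?thesis using pk_mesh[OF x y] by blast
qed

definition K :: "'a \<Rightarrow> 'a \<Rightarrow> nat" where "K x y = (LEAST k. pk k x \<noteq> pk k y)"

lemma K_sym: "K x y = K y x" unfolding K_def by (simp add: eq_commute)

lemma K_props:
  assumes x: "x \<in> X" and y: "y \<in> X" and ne: "x \<noteq> y"
  shows "pk (K x y) x \<noteq> pk (K x y) y" "K x y \<ge> 1" "\<And>k. pk k x = pk k y \<longleftrightarrow> k < K x y"
proof -
  obtain k0 where k0: "pk k0 x \<noteq> pk k0 y" using sep[OF x y ne] by blast
  show K1: "pk (K x y) x \<noteq> pk (K x y) y" unfolding K_def by (rule LeastI[of "\<lambda>k. pk k x \<noteq> pk k y", OF k0])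
  show "K x y \<ge> 1"
  proof (rule ccontr)
    assume "\<not> K x y \<ge> 1"
    then have "K x y = 0" by simp
    then show False using K1 pk0[OF x] pk0[OF y] by simp
  qed
  fix k
  show "pk k x = pk k y \<longleftrightarrow> k < K x y"
  proof
    assume "pk k x = pk k y"
    then show "k < K x y" using pk_down[OF x y, of k "K x y"] K1 by (meson not_le)
  next
    assume "k < K x y"
    then show "pk k x = pk k y" unfolding K_def using not_less_Least by blast
  qed
qed

definition jj :: "nat \<Rightarrow> nat" where "jj m = (case m of 0 \<Rightarrow> 0 | Suc l \<Rightarrow> P l)"

lemma jj_lt: "jj m < P m"
  by (cases m) (auto simp: jj_def P_pos P_Suc)

definition cc :: "nat \<Rightarrow> nat \<Rightarrow> real" where
  "cc m r = 1 + real_of_int ((int (jj m) - int r) mod int (P m)) / real (P m)"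

lemma cc_bounds: "1 \<le> cc m r \<and> cc m r < 2"
proof -
  have P: "int (P m) > 0" using P_pos by simp
  let ?s = "(int (jj m) - int r) mod int (P m)"
  have "0 \<le> ?s" "?s < int (P m)" using P by simp_all
  then have "0 \<le> real_of_int ?s" "real_of_int ?s < real (P m)" by linarith+
  then have "0 \<le> real_of_int ?s / real (P m)" "real_of_int ?s / real (P m) < 1"
    using P_pos[of m] by (simp_all add: divide_less_eq)
  then show ?thesis unfolding cc_def by linarith
qed

lemma cc_step:
  assumes r: "r < P m" and nj: "r \<noteq> jj m"
  shows "cc m (Suc r mod P m) < cc m r"
proof -
  define Q where "Q = int (P m)"
  have Q: "Q > 0" using P_pos Q_def by simp
  define s where "s = (int (jj m) - int r) mod Q"
  have s0: "0 \<le> s" "s < Q" using Q s_def by simp_all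
  have sne: "s \<noteq> 0"
  proof
    assume s: "s = 0"
    have jl: "int (jj m) < Q" "int r < Q" using jj_lt r Q_def by simp_all
    show False
    proof (cases "jj m \<ge> r")
      case True
      then have "(int (jj m) - int r) mod Q = int (jj m) - int r"
        using jl by (intro mod_pos_pos_trivial) simp_all
      then show False using s s_def True nj by simp
    next
      case False
      have "(int (jj m) - int r) mod Q = (int (jj m) - int r + Q) mod Q" by simp
      also have "\<dots> = int (jj m) - int r + Q"
        using jl False by (intro mod_pos_pos_trivial) simp_all
      finally show False using s s_def False jl by simp
    qed
  qed
  have "int (Suc r mod P m) = (int r + 1) mod Q" unfolding Q_def by (simp add: zmod_int add.commute)
  then have "(int (jj m) - int (Suc r mod P m)) mod Q = (int (jj m) - (int r + 1)) mod Q"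
    by (simp add: mod_diff_right_eq)
  also have "\<dots> = (s - 1) mod Q" unfolding s_def by (simp add: mod_diff_left_eq algebra_simps)
  also have "\<dots> = s - 1" using s0 sne by (intro mod_pos_pos_trivial) simp_all
  finally have eq: "(int (jj m) - int (Suc r mod P m)) mod Q = s - 1" .
  have "cc m (Suc r mod P m) = 1 + real_of_int (s - 1) / real (P m)"
    unfolding cc_def using eq Q_def by simp
  also have "\<dots> < 1 + real_of_int s / real (P m)"
    using P_pos[of m] by (simp add: divide_strict_right_mono)
  also have "\<dots> = cc m r" unfolding cc_def s_def Q_def by simp
  finally show ?thesis .
qed

definition rho :: "'a \<Rightarrow> 'a \<Rightarrow> real" where
  "rho x y = (if x \<in> X \<and> y \<in> X \<and> x \<noteq> y then (1/2)^(K x y) * cc (K x y - 1) (pk (K x y - 1) x) else 0)"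

lemma rho_ne: "x \<in> X \<Longrightarrow> y \<in> X \<Longrightarrow> x \<noteq> y \<Longrightarrow>
    rho x y = (1/2)^(K x y) * cc (K x y - 1) (pk (K x y - 1) x)"
  unfolding rho_def by simp

lemma rho_bounds: assumes "x \<in> X" "y \<in> X" "x \<noteq> y"
  shows "(1/2)^(K x y) \<le> rho x y" "rho x y < 2 * (1/2)^(K x y)"
proof -
  have c: "1 \<le> cc (K x y - 1) (pk (K x y - 1) x)" "cc (K x y - 1) (pk (K x y - 1) x) < 2"
    using cc_bounds by blast+
  have pos: "(0::real) < (1/2)^(K x y)" by simp
  show "(1/2)^(K x y) \<le> rho x y" unfolding rho_ne[OF assms]
    using mult_left_mono[OF c(1), of "(1/2)^(K x y)"] pos by simp
  show "rho x y < 2 * (1/2)^(K x y)" unfolding rho_ne[OF assms] using c(2) pos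
    by (simp add: mult.commute)
qed

lemma rho_nonneg: "0 \<le> rho x y"
proof -
  have c: "0 \<le> cc (K x y - 1) (pk (K x y - 1) x)" using cc_bounds[of "K x y - 1" "pk (K x y - 1) x"] by linarith
  have "0 \<le> (1/2::real)^(K x y) * cc (K x y - 1) (pk (K x y - 1) x)"
    by (rule mult_nonneg_nonneg[OF _ c]) simp
  then show ?thesis unfolding rho_def by (simp only: if_split) simp
qed

lemma rho_sym: "rho x y = rho y x"
proof (cases "x \<in> X \<and> y \<in> X \<and> x \<noteq> y")
  case True
  then have xy: "x \<in> X" "y \<in> X" "x \<noteq> y" by auto
  have "K x y - 1 < K x y" using K_props(2)[OF xy] by simp
  then have "pk (K x y - 1) x = pk (K x y - 1) y" using K_props(3)[OF xy] by blast
  then show ?thesis using rho_ne[OF xy] rho_ne[OF xy(2,1) xy(3)[symmetric]] K_sym[of x y] by simp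
qed (auto simp: rho_def)

lemma rho_zero: "x \<in> X \<Longrightarrow> y \<in> X \<Longrightarrow> rho x y = 0 \<longleftrightarrow> x = y"
proof
  assume xy: "x \<in> X" "y \<in> X" "rho x y = 0"
  show "x = y"
  proof (rule ccontr)
    assume "x \<noteq> y"
    then have "(1/2)^(K x y) \<le> rho x y" using rho_bounds xy by blast
    moreover have "(0::real) < (1/2)^(K x y)" by simp
    ultimately show False using xy by linarith
  qed
qed (simp add: rho_def)

lemma rho_lt: assumes x: "x \<in> X" and y: "y \<in> X"
  shows "rho x y < (1/2)^k \<longleftrightarrow> pk k x = pk k y"
proof (cases "x = y")
  case True
  then show ?thesis by (simp add: rho_def)
next
  case False
  note b = rho_bounds[OF x y False]
  show ?thesis
  proof
    assume "rho x y < (1/2)^k"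
    then have "(1/2::real)^(K x y) < (1/2)^k" using b by linarith
    have "k < K x y"
    proof (rule ccontr)
      assume "\<not> k < K x y"
      then have "K x y \<le> k" by simp
      then have "(1/2::real)^k \<le> (1/2)^(K x y)" by (rule power_decreasing) auto
      then show False using \<open>(1/2::real)^(K x y) < (1/2)^k\<close> by linarith
    qed
    then show "pk k x = pk k y" using K_props(3)[OF x y False] by blast
  next
    assume "pk k x = pk k y"
    then have "Suc k \<le> K x y" using K_props(3)[OF x y False] by simp
    then have "(1/2::real)^(K x y) \<le> (1/2)^(Suc k)" by (rule power_decreasing) auto
    then show "rho x y < (1/2)^k" using b by simp
  qed
qed

end

context odo_inf
begin

lemma rho_ultra:
  assumes x: "x \<in> X" and y: "y \<in> X" and z: "z \<in> X"
  shows "rho x z \<le> max (rho x y) (rho y z)"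
proof (cases "x = z \<or> x = y \<or> y = z")
  case True
  then show ?thesis
  proof (elim disjE)
    assume "x = z" then show ?thesis using rho_zero[OF x x] rho_nonneg[of x y] by simp
  next
    assume "x = y" then show ?thesis by simp
  next
    assume "y = z" then show ?thesis by simp
  qed
next
  case False
  then have ne: "x \<noteq> z" "x \<noteq> y" "y \<noteq> z" by auto
  define K1 where "K1 = K x y"
  define K2 where "K2 = K y z"
  define K3 where "K3 = K x z"
  note k1 = K_props[OF x y ne(2), folded K1_def]
  note k2 = K_props[OF y z ne(3), folded K2_def]
  note k3 = K_props[OF x z ne(1), folded K3_def]
  note b1 = rho_bounds[OF x y ne(2), folded K1_def]
  note b2 = rho_bounds[OF y z ne(3), folded K2_def]
  note b3 = rho_bounds[OF x z ne(1), folded K3_def]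
  have ge: "min K1 K2 \<le> K3"
  proof (rule ccontr)
    assume "\<not> min K1 K2 \<le> K3"
    then have "K3 < K1" "K3 < K2" by auto
    then have "pk K3 x = pk K3 y" "pk K3 y = pk K3 z" using k1(3) k2(3) by blast+
    then show False using k3(1) by simp
  qed
  have half: "2 * (1/2::real)^K3 \<le> (1/2)^k" if "k < K3" for k
  proof -
    have "(1/2::real)^K3 \<le> (1/2)^(Suc k)" by (rule power_decreasing) (use that in auto)
    then show ?thesis by simp
  qed
  show ?thesis
  proof (cases "K1 \<le> K2")
    case True
    show ?thesis
    proof (cases "K3 = K1")
      case True
      have "pk (K1 - 1) x = pk (K1 - 1) x" by simp
      have "rho x z = (1/2)^K1 * cc (K1 - 1) (pk (K1 - 1) x)"
        using rho_ne[OF x z ne(1)] True K3_def by simp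
      also have "\<dots> = rho x y" using rho_ne[OF x y ne(2)] K1_def by simp
      finally show ?thesis by simp
    next
      case False
      then have "K1 < K3" using ge \<open>K1 \<le> K2\<close> by simp
      then show ?thesis using b3(2) half[of K1] b1(1) by simp
    qed
  next
    case False
    then have lt: "K2 < K1" by simp
    show ?thesis
    proof (cases "K3 = K2")
      case True
      have "K2 - 1 < K1" using lt by simp
      then have eqp: "pk (K2 - 1) x = pk (K2 - 1) y" using k1(3) by blast
      have "rho x z = (1/2)^K2 * cc (K2 - 1) (pk (K2 - 1) x)"
        using rho_ne[OF x z ne(1)] True K3_def by simp
      also have "\<dots> = (1/2)^K2 * cc (K2 - 1) (pk (K2 - 1) y)" using eqp by simp
      also have "\<dots> = rho y z" using rho_ne[OF y z ne(3)] K2_def by simp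
      finally show ?thesis by simp
    next
      case False
      then have "K2 < K3" using ge lt by simp
      then show ?thesis using b3(2) half[of K2] b2(1) by simp
    qed
  qed
qed

lemma rho_metric: "Metric_space X rho"
proof
  show "\<And>x y. 0 \<le> rho x y" by (rule rho_nonneg)
  show "\<And>x y. rho x y = rho y x" by (rule rho_sym)
  show "\<And>x y. x \<in> X \<Longrightarrow> y \<in> X \<Longrightarrow> rho x y = 0 \<longleftrightarrow> x = y" by (rule rho_zero)
  fix x y z assume xyz: "x \<in> X" "y \<in> X" "z \<in> X"
  have "rho x z \<le> max (rho x y) (rho y z)" by (rule rho_ultra[OF xyz])
  then show "rho x z \<le> rho x y + rho y z" using rho_nonneg[of x y] rho_nonneg[of y z] by linarith
qed

lemma rho_top: "Metric_space.mtopology X rho = top_of_set X"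
proof (rule mtop_eq[OF rho_metric])
  fix x and r :: real assume x: "x \<in> X" and r: "r > 0"
  obtain k where k: "(1/2::real)^k < r" using real_arch_pow_inv[OF r, of "1/2"] by auto
  obtain \<delta> where d: "\<delta> > 0" "\<forall>y\<in>X. dist y x < \<delta> \<longrightarrow> pk k y = pk k x" using pk_open[OF x] by blast
  show "\<exists>e>0. \<forall>y\<in>X. dist y x < e \<longrightarrow> rho x y < r"
  proof (intro exI[of _ \<delta>] conjI ballI impI)
    fix y assume y: "y \<in> X" "dist y x < \<delta>"
    then have "pk k x = pk k y" using d by simp
    then have "rho x y < (1/2)^k" using rho_lt[OF x y(1)] by simp
    then show "rho x y < r" using k by linarith
  qed (rule d(1))
next
  fix x and e :: real assume x: "x \<in> X" and e: "e > 0"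
  obtain k where k: "(1/2::real)^k < e" using real_arch_pow_inv[OF e, of "1/2"] by auto
  have k': "(1/2::real)^(Suc k) \<le> (1/2)^k" by (rule power_decreasing) auto
  show "\<exists>r>0. \<forall>y\<in>X. rho x y < r \<longrightarrow> dist y x < e"
  proof (intro exI[of _ "(1/2)^(Suc k)"] conjI ballI impI)
    fix y assume y: "y \<in> X" "rho x y < (1/2)^(Suc k)"
    then have "pk (Suc k) x = pk (Suc k) y" using rho_lt[OF x y(1), of "Suc k"] by blast
    then have "D x y \<le> (1/2)^(Suc k)" using pk_mesh[OF x y(1)] by simp
    then have "dist x y < e" using dist_le_D[OF x y(1)] k k' by linarith
    then show "dist y x < e" by (simp add: dist_commute)
  qed simp
qed

lemma bad_finite: assumes x: "x \<in> X" shows "\<exists>M. \<forall>m\<ge>M. pk m x \<noteq> jj m"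
proof (rule ccontr)
  assume "\<not> (\<exists>M. \<forall>m\<ge>M. pk m x \<noteq> jj m)"
  then have h: "\<And>M. \<exists>m\<ge>M. pk m x = jj m" by blast
  obtain m1 where m1: "m1 \<ge> 1" "pk m1 x = jj m1" using h[of 1] by blast
  obtain m2 where m2: "m2 \<ge> Suc m1" "pk m2 x = jj m2" using h[of "Suc m1"] by blast
  obtain l1 where l1: "m1 = Suc l1" using m1(1) by (cases m1) auto
  obtain l2 where l2: "m2 = Suc l2" using m2(1) by (cases m2) auto
  have j1: "jj m1 = P l1" using l1 by (simp add: jj_def)
  have j2: "jj m2 = P l2" using l2 by (simp add: jj_def)
  have "m1 \<le> l2" using m2(1) l2 by simp
  then have dv: "P m1 dvd P l2" by (rule P_dvd)
  have "pk m1 x = pk m2 x mod P m1" using pk_nest[OF x] m2(1) by simp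
  also have "\<dots> = P l2 mod P m1" using m2(2) j2 by simp
  also have "\<dots> = 0" using dv by simp
  finally have "P l1 = 0" using m1(2) j1 by simp
  then show False using P_pos[of l1] by simp
qed

lemma rho_LRS: "LRS X T rho"
  unfolding LRS_def
proof
  fix x assume x: "x \<in> X"
  obtain M where M: "\<forall>m\<ge>M. pk m x \<noteq> jj m" using bad_finite[OF x] by blast
  show "\<exists>\<epsilon>>0. \<forall>y\<in>X. 0 < rho x y \<and> rho x y < \<epsilon> \<longrightarrow> rho (T x) (T y) < rho x y"
  proof (intro exI[of _ "(1/2)^(Suc M)"] conjI ballI impI)
    fix y assume y: "y \<in> X" and r: "0 < rho x y \<and> rho x y < (1/2)^(Suc M)"
    have ne: "x \<noteq> y" using r rho_zero[OF x y] by auto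
    have agr: "pk (Suc M) x = pk (Suc M) y" using rho_lt[OF x y] r by blast
    define KK where "KK = K x y"
    have KK: "Suc M < KK" using K_props(3)[OF x y ne] agr KK_def by blast
    have Tx: "T x \<in> X" "T y \<in> X" using TX x y by auto
    have equiv: "pk k (T x) = pk k (T y) \<longleftrightarrow> pk k x = pk k y" for k
    proof -
      have a: "pk k x < P k" "pk k y < P k" using pk_lt x y by auto
      have "Suc (pk k x) mod P k = Suc (pk k y) mod P k \<longleftrightarrow> pk k x = pk k y"
      proof
        assume h: "Suc (pk k x) mod P k = Suc (pk k y) mod P k"
        show "pk k x = pk k y"
        proof (cases "Suc (pk k x) < P k"; cases "Suc (pk k y) < P k")
          assume "Suc (pk k x) < P k" "Suc (pk k y) < P k"
          then show ?thesis using h by simp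
        next
          assume "Suc (pk k x) < P k" "\<not> Suc (pk k y) < P k"
          then have "Suc (pk k y) = P k" using a by simp
          then show ?thesis using h \<open>Suc (pk k x) < P k\<close> by simp
        next
          assume "\<not> Suc (pk k x) < P k" "Suc (pk k y) < P k"
          then have "Suc (pk k x) = P k" using a by simp
          then show ?thesis using h \<open>Suc (pk k y) < P k\<close> by simp
        next
          assume "\<not> Suc (pk k x) < P k" "\<not> Suc (pk k y) < P k"
          then show ?thesis using a by simp
        qed
      qed simp
      then show ?thesis using pk_T[OF x] pk_T[OF y] by simp
    qed
    have neT: "T x \<noteq> T y"
    proof
      assume "T x = T y"
      then have "pk KK x = pk KK y" using equiv[of KK] by simp
      then show False using K_props(1)[OF x y ne] KK_def by simp
    qed
    have KT: "K (T x) (T y) = KK"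
      unfolding KK_def K_def using equiv by simp
    have nb: "pk (KK - 1) x \<noteq> jj (KK - 1)" using M KK by simp
    have lt: "pk (KK - 1) x < P (KK - 1)" using pk_lt[OF x] .
    have "rho (T x) (T y) = (1/2)^KK * cc (KK - 1) (pk (KK - 1) (T x))"
      using rho_ne[OF Tx neT] KT by simp
    also have "\<dots> = (1/2)^KK * cc (KK - 1) (Suc (pk (KK - 1) x) mod P (KK - 1))"
      using pk_T[OF x] by simp
    also have "\<dots> < (1/2)^KK * cc (KK - 1) (pk (KK - 1) x)"
      using cc_step[OF lt nb] by simp
    also have "\<dots> = rho x y" using rho_ne[OF x y ne] KK_def by simp
    finally show "rho (T x) (T y) < rho x y" .
  qed simp
qed

end

theorem corollary3p3:
  fixes X :: "'a::metric_space set" and T :: "'a \<Rightarrow> 'a"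
  assumes "odometer X T"
  shows "\<exists>\<rho>. Metric_space X \<rho> \<and> Metric_space.mtopology X \<rho> = top_of_set X \<and> LRS X T \<rho>"
proof -
  from assms obtain x0 where o: "compact X" "T ` X \<subseteq> X" "continuous_on X T"
    "equicontinuous_sys X T" "x0 \<in> X" "regularly_recurrent X T x0" "dense_orbit X T x0"
    unfolding odometer_def dyn_system_def by blast
  show ?thesis
  proof (cases "finite X")
    case True
    then show ?thesis using finite_case[OF True, of T] by blast
  next
    case False
    interpret odo_inf X T x0
      by (unfold_locales) (use o False in auto)
    show ?thesis using rho_metric rho_top rho_LRS by blast
  qed
qed

end
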